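(* Let $(E\to M,\rho,\langle\cdot,\cdot\rangle,\circ)$ be a Courant algebroid and let $\mathbf I,\mathbf J$ be vector bundle endomorphisms of $E$ over $\mathrm{id}_M$ such that $\mathbf I^2=\mathbf J^2=-1$, $\mathbf I\mathbf J=-\mathbf J\mathbf I$, both $\mathbf I$ and $\mathbf J$ are orthogonal for $\langle\cdot,\cdot\rangle$, and $N_{\mathbf I,\mathbf I}=N_{\mathbf J,\mathbf J}=N_{\mathbf I,\mathbf J}=0$. Then $(\mathbf I,\mathbf J,\mathbf I\mathbf J)$ is a hypercomplex structure on $E$.
   Context: A Courant algebroid $(E\to M,\rho,\langle\cdot,\cdot\rangle,\circ)$ consists of a real vector bundle $E\to M$ over a smooth manifold, a nondegenerate symmetric fiberwise bilinear pairing $\langle\cdot,\cdot\rangle$ on $E$, a vector bundle map $\rho:E\to TM$ (the anchor), and an $\mathbb R$-bilinear operation $\circ$ on $\Gamma(E)$ (the Dorfman bracket) such that for all $f\in C^\infty(M)$, $x,y,z\in\Gamma(E)$: $x\circ(y\circ z)=(x\circ y)\circ z+y\circ(x\circ z)$; $\rho(x\circ y)=[\rho(x),\rho(y)]$; $x\circ(fy)=(\rho(x)f)y+f(x\circ y)$; $x\circ y+y\circ x=2D\langle x,y\rangle$; $(Df)\circ x=0$; $\rho(x)\langle y,z\rangle=\langle x\circ y,z\rangle+\langle y,x\circ z\rangle$. Here $D:C^\infty(M)\to\Gamma(E)$ is the $\mathbb R$-linear map defined by $\langle Df,x\rangle=\tfrac12\rho(x)f$. For vector bundle endomorphisms $F,G$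 of $E$ (over $\mathrm{id}_M$), the Nijenhuis concomitant is the tensor $N_{F,G}:E\otimes E\to E$ given by $N_{F,G}(X,Y)=FX\circ GY-F(X\circ GY)-G(FX\circ Y)+FG(X\circ Y)+GX\circ FY-G(X\circ FY)-F(GX\circ Y)+GF(X\circ Y)$. An almost hypercomplex structure on $E$ is a triple $(\mathbf I,\mathbf J,\mathbf K)$ of vector bundle endomorphisms of $E$ over $\mathrm{id}_M$, each orthogonal for $\langle\cdot,\cdot\rangle$, with $\mathbf I^2=\mathbf J^2=\mathbf K^2=\mathbf I\mathbf J\mathbf K=-1$. It is a hypercomplex structure if $N_{\mathbf I,\mathbf I},N_{\mathbf J,\mathbf J},N_{\mathbf K,\mathbf K},N_{\mathbf I,\mathbf J},N_{\mathbf J,\mathbf K},N_{\mathbf K,\mathbf I}$ all vanish. *)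

theory Defs
  imports Complex_Main
begin

text \<open>Algebraic model of a Courant algebroid.  'f plays the role of the
real algebra C^infinity(M), 'e the role of the space of sections Gamma(E),
which is a module over 'f via sm.  Vector bundle endomorphisms over id_M are
exactly the C^infinity(M)-linear maps of sections, and tensors such as the
Nijenhuis concomitant vanish iff they vanish on all pairs of sections.\<close>

locale courant_algebroid =
  fixes sm :: "'f::{real_algebra_1,comm_ring_1} \<Rightarrow> 'e::real_vector \<Rightarrow> 'e"
    and pair :: "'e \<Rightarrow> 'e \<Rightarrow> 'f"
    and anchor :: "'e \<Rightarrow> 'f \<Rightarrow> 'f"
    and dorf :: "'e \<Rightarrow> 'e \<Rightarrow> 'e"
    and D :: "'f \<Rightarrow> 'e"
  assumes sm_add_left: "sm (f + g) x = sm f x + sm g x"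
    and sm_add_right: "sm f (x + y) = sm f x + sm f y"
    and sm_mult: "sm (f * g) x = sm f (sm g x)"
    and sm_one: "sm 1 x = x"
    and sm_of_real: "sm (of_real r) x = r *\<^sub>R x"
    and pair_sym: "pair x y = pair y x"
    and pair_add: "pair (x + y) z = pair x z + pair y z"
    and pair_sm: "pair (sm f x) y = f * pair x y"
    and pair_nondeg: "(\<forall>y. pair x y = 0) \<Longrightarrow> x = 0"
    and anchor_add: "anchor (x + y) = (\<lambda>g. anchor x g + anchor y g)"
    and anchor_sm: "anchor (sm f x) g = f * anchor x g"
    and anchor_deriv_add: "anchor x (g + h) = anchor x g + anchor x h"
    and anchor_deriv_scaleR: "anchor x (r *\<^sub>R g) = r *\<^sub>R anchor x g"
    and anchor_deriv_mult: "anchor x (g * h) = anchor x g * h + g * anchor x h"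
    and dorf_add_left: "dorf (x + y) z = dorf x z + dorf y z"
    and dorf_add_right: "dorf x (y + z) = dorf x y + dorf x z"
    and dorf_scaleR_left: "dorf (r *\<^sub>R x) y = r *\<^sub>R dorf x y"
    and dorf_scaleR_right: "dorf x (r *\<^sub>R y) = r *\<^sub>R dorf x y"
    and D_def: "pair (D f) x = (1/2) *\<^sub>R anchor x f"
    and jacobi: "dorf x (dorf y z) = dorf (dorf x y) z + dorf y (dorf x z)"
    and anchor_hom: "anchor (dorf x y) = (\<lambda>g. anchor x (anchor y g) - anchor y (anchor x g))"
    and leibniz: "dorf x (sm f y) = sm (anchor x f) y + sm f (dorf x y)"
    and dorf_sym: "dorf x y + dorf y x = 2 *\<^sub>R D (pair x y)"
    and D_dorf: "dorf (D f) x = 0"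
    and invariance: "anchor x (pair y z) = pair (dorf x y) z + pair y (dorf x z)"

definition bundle_endo :: "('f \<Rightarrow> 'e::plus \<Rightarrow> 'e) \<Rightarrow> ('e \<Rightarrow> 'e) \<Rightarrow> bool" where
  "bundle_endo sm F \<longleftrightarrow> (\<forall>x y. F (x + y) = F x + F y) \<and> (\<forall>f x. F (sm f x) = sm f (F x))"

definition orthogonal_endo :: "('e \<Rightarrow> 'e \<Rightarrow> 'f) \<Rightarrow> ('e \<Rightarrow> 'e) \<Rightarrow> bool" where
  "orthogonal_endo pair F \<longleftrightarrow> (\<forall>x y. pair (F x) (F y) = pair x y)"

definition nijenhuis_conc :: "('e \<Rightarrow> 'e \<Rightarrow> 'e::ab_group_add) \<Rightarrow> ('e \<Rightarrow> 'e) \<Rightarrow> ('e \<Rightarrow> 'e) \<Rightarrow> 'e \<Rightarrow> 'e \<Rightarrow> 'e" where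
  "nijenhuis_conc dorf F G X Y =
     dorf (F X) (G Y) - F (dorf X (G Y)) - G (dorf (F X) Y) + F (G (dorf X Y))
   + dorf (G X) (F Y) - G (dorf X (F Y)) - F (dorf (G X) Y) + G (F (dorf X Y))"

definition nij_vanishes :: "('e \<Rightarrow> 'e \<Rightarrow> 'e::ab_group_add) \<Rightarrow> ('e \<Rightarrow> 'e) \<Rightarrow> ('e \<Rightarrow> 'e) \<Rightarrow> bool" where
  "nij_vanishes dorf F G \<longleftrightarrow> (\<forall>X Y. nijenhuis_conc dorf F G X Y = 0)"

definition almost_hypercomplex ::
  "('f \<Rightarrow> 'e \<Rightarrow> 'e::ab_group_add) \<Rightarrow> ('e \<Rightarrow> 'e \<Rightarrow> 'f) \<Rightarrow> ('e \<Rightarrow> 'e) \<Rightarrow> ('e \<Rightarrow> 'e) \<Rightarrow> ('e \<Rightarrow> 'e) \<Rightarrow> bool" where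
  "almost_hypercomplex sm pair I J K \<longleftrightarrow>
     bundle_endo sm I \<and> bundle_endo sm J \<and> bundle_endo sm K \<and>
     orthogonal_endo pair I \<and> orthogonal_endo pair J \<and> orthogonal_endo pair K \<and>
     (\<forall>x. I (I x) = - x) \<and> (\<forall>x. J (J x) = - x) \<and> (\<forall>x. K (K x) = - x) \<and>
     (\<forall>x. I (J (K x)) = - x)"

definition hypercomplex ::
  "('f \<Rightarrow> 'e \<Rightarrow> 'e::ab_group_add) \<Rightarrow> ('e \<Rightarrow> 'e \<Rightarrow> 'f) \<Rightarrow> ('e \<Rightarrow> 'e \<Rightarrow> 'e) \<Rightarrow> ('e \<Rightarrow> 'e) \<Rightarrow> ('e \<Rightarrow> 'e) \<Rightarrow> ('e \<Rightarrow> 'e) \<Rightarrow> bool" where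
  "hypercomplex sm pair dorf I J K \<longleftrightarrow>
     almost_hypercomplex sm pair I J K \<and>
     nij_vanishes dorf I I \<and> nij_vanishes dorf J J \<and> nij_vanishes dorf K K \<and>
     nij_vanishes dorf I J \<and> nij_vanishes dorf J K \<and> nij_vanishes dorf K I"

end

theory Submission imports Defs begin
lemma additive_neg:
  fixes F :: "'e::ab_group_add \<Rightarrow> 'e"
  assumes "\<And>x y. F (x + y) = F x + F y"
  shows "F (- x) = - F x" "F (x - y) = F x - F y" "F 0 = 0"
proof -
  have z: "F 0 = 0" using assms[of 0 0] by simp
  have n: "\<And>x. F (- x) = - F x" using assms z by (metis add.right_inverse minus_unique)
  show "F 0 = 0" by (rule z)
  show "F (- x) = - F x" by (rule n)
  show "F (x - y) = F x - F y" using assms[of x "-y"] n[of y] by simp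
qed

lemma keyKK:
  fixes dorf :: "'e::real_vector \<Rightarrow> 'e \<Rightarrow> 'e" and I J :: "'e \<Rightarrow> 'e"
  assumes dl: "\<And>x y z. dorf (x + y) z = dorf x z + dorf y z"
    and dr: "\<And>x y z. dorf x (y + z) = dorf x y + dorf x z"
    and Ia: "\<And>x y. I (x + y) = I x + I y"
    and Ja: "\<And>x y. J (x + y) = J x + J y"
    and II: "\<And>x. I (I x) = - x" and JJ: "\<And>x. J (J x) = - x"
    and IJ: "\<And>x. I (J x) = - J (I x)"
  shows "nijenhuis_conc dorf (I \<circ> J) (I \<circ> J) X Y + nijenhuis_conc dorf (I \<circ> J) (I \<circ> J) X Y =
     nijenhuis_conc dorf I I X Y - J (nijenhuis_conc dorf I I X (J Y)) - J (nijenhuis_conc dorf I I (J X) Y)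
     + nijenhuis_conc dorf I I (J X) (J Y)
     + nijenhuis_conc dorf J J X Y - I (nijenhuis_conc dorf J J X (I Y)) - I (nijenhuis_conc dorf J J (I X) Y)
     + nijenhuis_conc dorf J J (I X) (I Y)"
proof -
  note In = additive_neg[of I, OF Ia] and Jn = additive_neg[of J, OF Ja]
  have dln: "\<And>x y. dorf (- x) y = - dorf x y" using additive_neg[of "\<lambda>x. dorf x _"] dl by blast
  have drn: "\<And>x y. dorf x (- y) = - dorf x y" using additive_neg[of "dorf _"] dr by blast
  show ?thesis
    unfolding nijenhuis_conc_def diff_conv_add_uminus
    apply (simp only: Ia Ja In Jn II JJ IJ dl dr dln drn o_apply minus_add_distrib minus_minus)
    apply (simp add: algebra_simps)
    done
qed
lemma keyJK:
  fixes dorf :: "'e::real_vector \<Rightarrow> 'e \<Rightarrow> 'e" and I J :: "'e \<Rightarrow> 'e"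
  assumes dl: "\<And>x y z. dorf (x + y) z = dorf x z + dorf y z"
    and dr: "\<And>x y z. dorf x (y + z) = dorf x y + dorf x z"
    and Ia: "\<And>x y. I (x + y) = I x + I y"
    and Ja: "\<And>x y. J (x + y) = J x + J y"
    and II: "\<And>x. I (I x) = - x" and JJ: "\<And>x. J (J x) = - x"
    and IJ: "\<And>x. I (J x) = - J (I x)"
  shows "nijenhuis_conc dorf J (I \<circ> J) X Y + nijenhuis_conc dorf J (I \<circ> J) X Y + nijenhuis_conc dorf J (I \<circ> J) X Y + nijenhuis_conc dorf J (I \<circ> J) X Y =
    - I (nijenhuis_conc dorf I I X Y) + I (J (nijenhuis_conc dorf I I X (J Y))) + I (J (nijenhuis_conc dorf I I (J X) Y)) + I (nijenhuis_conc dorf I I (J X) (J Y))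
    + I (nijenhuis_conc dorf J J X Y) - nijenhuis_conc dorf J J X (I Y) - nijenhuis_conc dorf J J (I X) Y - I (nijenhuis_conc dorf J J (I X) (I Y))"
proof -
  note In = additive_neg[of I, OF Ia] and Jn = additive_neg[of J, OF Ja]
  have dln: "\<And>x y. dorf (- x) y = - dorf x y" using additive_neg[of "\<lambda>x. dorf x _"] dl by blast
  have drn: "\<And>x y. dorf x (- y) = - dorf x y" using additive_neg[of "dorf _"] dr by blast
  show ?thesis
    unfolding nijenhuis_conc_def diff_conv_add_uminus
    apply (simp only: Ia Ja In Jn II JJ IJ dl dr dln drn o_apply minus_add_distrib minus_minus)
    apply (simp add: algebra_simps)
    done
qed

lemma keyKI:
  fixes dorf :: "'e::real_vector \<Rightarrow> 'e \<Rightarrow> 'e" and I J :: "'e \<Rightarrow> 'e"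
  assumes dl: "\<And>x y z. dorf (x + y) z = dorf x z + dorf y z"
    and dr: "\<And>x y z. dorf x (y + z) = dorf x y + dorf x z"
    and Ia: "\<And>x y. I (x + y) = I x + I y"
    and Ja: "\<And>x y. J (x + y) = J x + J y"
    and II: "\<And>x. I (I x) = - x" and JJ: "\<And>x. J (J x) = - x"
    and IJ: "\<And>x. I (J x) = - J (I x)"
  shows "nijenhuis_conc dorf (I \<circ> J) I X Y + nijenhuis_conc dorf (I \<circ> J) I X Y + nijenhuis_conc dorf (I \<circ> J) I X Y + nijenhuis_conc dorf (I \<circ> J) I X Y =
    - J (nijenhuis_conc dorf I I X Y) + nijenhuis_conc dorf I I X (J Y) + nijenhuis_conc dorf I I (J X) Y + J (nijenhuis_conc dorf I I (J X) (J Y))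
    + J (nijenhuis_conc dorf J J X Y) + I (J (nijenhuis_conc dorf J J X (I Y))) + I (J (nijenhuis_conc dorf J J (I X) Y)) - J (nijenhuis_conc dorf J J (I X) (I Y))"
proof -
  note In = additive_neg[of I, OF Ia] and Jn = additive_neg[of J, OF Ja]
  have dln: "\<And>x y. dorf (- x) y = - dorf x y" using additive_neg[of "\<lambda>x. dorf x _"] dl by blast
  have drn: "\<And>x y. dorf x (- y) = - dorf x y" using additive_neg[of "dorf _"] dr by blast
  show ?thesis
    unfolding nijenhuis_conc_def diff_conv_add_uminus
    apply (simp only: Ia Ja In Jn II JJ IJ dl dr dln drn o_apply minus_add_distrib minus_minus)
    apply (simp add: algebra_simps)
    done
qed

theorem mainTheorem10:
  fixes sm :: "'f::{real_algebra_1,comm_ring_1} \<Rightarrow> 'e::real_vector \<Rightarrow> 'e"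
    and pair :: "'e \<Rightarrow> 'e \<Rightarrow> 'f"
    and anchor :: "'e \<Rightarrow> 'f \<Rightarrow> 'f"
    and dorf :: "'e \<Rightarrow> 'e \<Rightarrow> 'e"
    and D :: "'f \<Rightarrow> 'e"
    and I J :: "'e \<Rightarrow> 'e"
  assumes "courant_algebroid sm pair anchor dorf D"
    and "bundle_endo sm I" and "bundle_endo sm J"
    and "\<forall>x. I (I x) = - x" and "\<forall>x. J (J x) = - x"
    and "\<forall>x. I (J x) = - J (I x)"
    and "orthogonal_endo pair I" and "orthogonal_endo pair J"
    and "nij_vanishes dorf I I" and "nij_vanishes dorf J J" and "nij_vanishes dorf I J"
  shows "hypercomplex sm pair dorf I J (I \<circ> J)"
proof -
  interpret C: courant_algebroid sm pair anchor dorf D by fact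
  have dl: "\<And>x y z. dorf (x + y) z = dorf x z + dorf y z" by (rule C.dorf_add_left)
  have dr: "\<And>x y z. dorf x (y + z) = dorf x y + dorf x z" by (rule C.dorf_add_right)
  have Ia: "\<And>x y. I (x + y) = I x + I y" and Ism: "\<And>f x. I (sm f x) = sm f (I x)"
    using assms(2) unfolding bundle_endo_def by auto
  have Ja: "\<And>x y. J (x + y) = J x + J y" and Jsm: "\<And>f x. J (sm f x) = sm f (J x)"
    using assms(3) unfolding bundle_endo_def by auto
  have II: "\<And>x. I (I x) = - x" and JJ: "\<And>x. J (J x) = - x" and IJ: "\<And>x. I (J x) = - J (I x)"
    using assms(4,5,6) by auto
  note In = additive_neg[of I, OF Ia] and Jn = additive_neg[of J, OF Ja]
  have NI: "\<And>X Y. nijenhuis_conc dorf I I X Y = 0" using assms(9) unfolding nij_vanishes_def by auto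
  have NJ: "\<And>X Y. nijenhuis_conc dorf J J X Y = 0" using assms(10) unfolding nij_vanishes_def by auto
  have two: "\<And>x::'e. x + x = 0 \<Longrightarrow> x = 0"
  proof -
    fix x :: 'e assume "x + x = 0"
    then have "(2::real) *\<^sub>R x = 0" by (simp add: scaleR_2)
    then show "x = 0" by simp
  qed
  have four: "\<And>x::'e. x + x + x + x = 0 \<Longrightarrow> x = 0"
  proof -
    fix x :: 'e assume "x + x + x + x = 0"
    then have "(x + x) + (x + x) = 0" by (simp add: add.assoc)
    then show "x = 0" using two by blast
  qed
  have KK: "nij_vanishes dorf (I \<circ> J) (I \<circ> J)"
    unfolding nij_vanishes_def
  proof (intro allI)
    fix X Y
    have e: "nijenhuis_conc dorf (I \<circ> J) (I \<circ> J) X Y +nijenhuis_conc dorf (I \<circ> J) (I \<circ> J) X Y = 0"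
      using keyKK[OF dl dr Ia Ja II JJ IJ, of X Y] by (simp only: NI NJ In(3) Jn(3) add_0_left add_0_right diff_0 diff_0_right minus_zero)
    show "nijenhuis_conc dorf (I \<circ> J) (I \<circ> J) X Y = 0" using two[OF e] .
  qed
  have JK: "nij_vanishes dorf J (I \<circ> J)"
    unfolding nij_vanishes_def
  proof (intro allI)
    fix X Y
    have e: "nijenhuis_conc dorf J (I \<circ> J) X Y +nijenhuis_conc dorf J (I \<circ> J) X Y +nijenhuis_conc dorf J (I \<circ> J) X Y +nijenhuis_conc dorf J (I \<circ> J) X Y = 0"
      using keyJK[OF dl dr Ia Ja II JJ IJ, of X Y] by (simp only: NI NJ In(3) Jn(3) add_0_left add_0_right diff_0 diff_0_right minus_zero)
    show "nijenhuis_conc dorf J (I \<circ> J) X Y = 0" using four[OF e] .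
  qed
  have KI: "nij_vanishes dorf (I \<circ> J) I"
    unfolding nij_vanishes_def
  proof (intro allI)
    fix X Y
    have e: "nijenhuis_conc dorf (I \<circ> J) I X Y +nijenhuis_conc dorf (I \<circ> J) I X Y +nijenhuis_conc dorf (I \<circ> J) I X Y +nijenhuis_conc dorf (I \<circ> J) I X Y = 0"
      using keyKI[OF dl dr Ia Ja II JJ IJ, of X Y] by (simp only: NI NJ In(3) Jn(3) add_0_left add_0_right diff_0 diff_0_right minus_zero)
    show "nijenhuis_conc dorf (I \<circ> J) I X Y = 0" using four[OF e] .
  qed
  have KKx: "\<And>x. (I \<circ> J) ((I \<circ> J) x) = - x"
    by (simp add: IJ In Jn II JJ)
  have IJK: "\<And>x. I (J ((I \<circ> J) x)) = - x"
    by (simp add: IJ In Jn II JJ)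
  have Kend: "bundle_endo sm (I \<circ> J)"
    unfolding bundle_endo_def by (simp add: Ia Ja Ism Jsm)
  have Korth: "orthogonal_endo pair (I \<circ> J)"
    using assms(7,8) unfolding orthogonal_endo_def by simp
  show ?thesis
    unfolding hypercomplex_def almost_hypercomplex_def
    using assms KK JK KI KKx IJK Kend Korth by blast
qed

end
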